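(* Let $a,b\in\mathbb{Z}$ with $\gcd(a,b)=1$ and $a^2+ab-b^2\not\equiv0\pmod5$. Let $m\ge1$ with $5\mid m$, and suppose $\{G_n(a,b)\}$ is complete mod $m$. Then $\{G_n(a,b)\}$ is complete mod $5m$.
   Context: For integers $a,b$ with $\gcd(a,b)=1$, the Gibonacci sequence $\{G_n(a,b)\}_{n\ge1}$ is defined by $G_1=a$, $G_2=b$, $G_{n+1}=G_{n-1}+G_n$. A sequence is complete mod $m$ if every residue class modulo $m$ contains some term of the sequence. *)

theory Defs
  imports "HOL-Number_Theory.Number_Theory"
begin

text \<open>gib_aux a b k = G_(k+1)(a,b), so G_1 = a, G_2 = b.\<close>
fun gib_aux :: "int \<Rightarrow> int \<Rightarrow> nat \<Rightarrow> int" where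
  "gib_aux a b 0 = a"
| "gib_aux a b (Suc 0) = b"
| "gib_aux a b (Suc (Suc k)) = gib_aux a b k + gib_aux a b (Suc k)"

definition G :: "int \<Rightarrow> int \<Rightarrow> nat \<Rightarrow> int" where
  "G a b n = gib_aux a b (n - 1)"

definition complete_mod :: "(nat \<Rightarrow> int) \<Rightarrow> int \<Rightarrow> bool" where
  "complete_mod s m \<longleftrightarrow> (\<forall>r::int. \<exists>n\<ge>1. [s n = r] (mod m))"

end

theory Submission
  imports Defs
begin


fun fi :: "nat \<Rightarrow> int" where
  "fi 0 = 0" | "fi (Suc 0) = 1" | "fi (Suc (Suc n)) = fi n + fi (Suc n)"

fun fp :: "nat \<Rightarrow> int \<times> int" where
  "fp 0 = (0, 1)" | "fp (Suc n) = (case fp n of (x, y) \<Rightarrow> (y, x + y))"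

lemma fp_fi: "fp n = (fi n, fi (Suc n))"
  by (induction n) auto

lemma fi_19: "fi 19 = 4181" and fi_20: "fi 20 = 6765"
proof -
  have "fp 20 = (6765, 10946)" by (simp add: eval_nat_numeral)
  moreover have "fp 19 = (4181, 6765)" by (simp add: eval_nat_numeral)
  ultimately show "fi 19 = 4181" "fi 20 = 6765" using fp_fi[of 19] fp_fi[of 20] by simp_all
qed

lemma fi_fib: "fi n = int (fib n)"
  by (induction n rule: fi.induct) auto

definition recs :: "(nat \<Rightarrow> int) \<Rightarrow> bool" where
  "recs H \<longleftrightarrow> (\<forall>n. H (Suc (Suc n)) = H n + H (Suc n))"

definition per :: "int \<Rightarrow> nat \<Rightarrow> bool" where
  "per q N \<longleftrightarrow> (\<forall>H. recs H \<longrightarrow> (\<forall>n. q dvd H (n + N) - H n))"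

lemma recsD: "recs H \<Longrightarrow> H (Suc (Suc n)) = H n + H (Suc n)"
  by (simp add: recs_def)

lemma rec_shift: "recs H \<Longrightarrow> H (n + k + 1) = fi k * H n + fi (k+1) * H (n+1)"
proof (induction k rule: fi.induct)
  case 1 then show ?case by simp
next
  case 2 then show ?case using recsD[of H n] by simp
next
  case (3 k)
  have "H (n + Suc (Suc k) + 1) = H (n + k + 1) + H (n + Suc k + 1)"
    using recsD[OF 3(3), of "n + k + 1"] by simp
  also have "\<dots> = fi (Suc (Suc k)) * H n + fi (Suc (Suc k) + 1) * H (n+1)"
    using 3 by (simp add: algebra_simps)
  finally show ?case .
qed

lemma per_fib:
  assumes "q dvd fi N" "q dvd fi (N+1) - 1"
  shows "per q N"
  unfolding per_def
proof (intro allI impI)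
  fix H :: "nat \<Rightarrow> int" and n assume r: "recs H"
  show "q dvd H (n + N) - H n"
  proof (cases N)
    case 0 then show ?thesis by simp
  next
    case (Suc M)
    have "H (n + N) = fi M * H n + fi N * H (n+1)"
      using rec_shift[OF r, of n M] Suc by simp
    moreover have "fi M = fi (N+1) - fi N" using Suc by simp
    ultimately have "H (n + N) - H n = (fi (N+1) - 1) * H n - fi N * H n + fi N * H (n+1)"
      by (simp add: algebra_simps)
    then show ?thesis using assms by simp
  qed
qed

lemma per_anti:
  assumes "q dvd fi K + 1" "q dvd fi (K+1)"
  shows "per q (2*(K+1))"
  unfolding per_def
proof (intro allI impI)
  fix H :: "nat \<Rightarrow> int" and n assume r: "recs H"
  have a: "q dvd H (i + (K+1)) + H i" for i
  proof -
    have "H (i + (K+1)) = fi K * H i + fi (K+1) * H (i+1)"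
      using rec_shift[OF r, of i K] by simp
    then have "H (i + (K+1)) + H i = (fi K + 1) * H i + fi (K+1) * H (i+1)"
      by (simp add: algebra_simps)
    then show ?thesis using assms by simp
  qed
  have e: "n + 2*(K+1) = (n + (K+1)) + (K+1)" by simp
  have "H (n + 2*(K+1)) - H n = (H ((n + (K+1)) + (K+1)) + H (n + (K+1))) - (H (n + (K+1)) + H n)"
    unfolding e by simp
  then show "q dvd H (n + 2*(K+1)) - H n"
    by (subst \<open>H (n + 2*(K+1)) - H n = _\<close>) (rule dvd_diff[OF a[of "n + (K+1)"] a[of n]])
qed

lemma per_dvd: "per q N \<Longrightarrow> d dvd q \<Longrightarrow> per d N"
  unfolding per_def using dvd_trans by blast

lemma per_mult: "per q N \<Longrightarrow> per q (k*N)"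
  unfolding per_def
proof (intro allI impI)
  fix H :: "nat \<Rightarrow> int" and n assume p: "\<forall>H. recs H \<longrightarrow> (\<forall>n. q dvd H (n + N) - H n)" and r: "recs H"
  show "q dvd H (n + k*N) - H n"
  proof (induction k arbitrary: n)
    case 0 then show ?case by simp
  next
    case (Suc k)
    have e: "n + Suc k * N = (n + N) + k*N" by simp
    have "H (n + Suc k * N) - H n = (H ((n + N) + k*N) - H (n+N)) + (H (n+N) - H n)"
      unfolding e by simp
    then show ?case using Suc[of "n+N"] p r by (metis dvd_add)
  qed
qed

lemma per_coprime: "per q1 N \<Longrightarrow> per q2 N \<Longrightarrow> coprime q1 q2 \<Longrightarrow> per (q1*q2) N"
  unfolding per_def by (simp add: divides_mult)

lemma per_eq: "per q N \<Longrightarrow> recs H \<Longrightarrow> H (n+N) = H n + q * ((H (n+N) - H n) div q)"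
  unfolding per_def by (metis add_diff_cancel_left' dvd_mult_div_cancel diff_add_cancel)

lemma per_recs:
  assumes "per q N" "recs H"
  shows "recs (\<lambda>n. (H (n+N) - H n) div q)"
  unfolding recs_def
proof
  fix n
  have d1: "q dvd H (n+N) - H n" and d2: "q dvd H (Suc n + N) - H (Suc n)"
    using assms unfolding per_def by blast+
  have "H (Suc (Suc n) + N) - H (Suc (Suc n)) = (H (n+N) - H n) + (H (Suc n + N) - H (Suc n))"
    using recsD[OF assms(2), of "n+N"] recsD[OF assms(2), of n] by simp
  then show "(H (Suc (Suc n) + N) - H (Suc (Suc n))) div q =
    (H (n + N) - H n) div q + (H (Suc n + N) - H (Suc n)) div q"
    using d1 d2 by (simp add: div_add)
qed

lemma lift:
  assumes pq: "per q N" and r: "recs H"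
  defines "B \<equiv> \<lambda>n. (H (n+N) - H n) div q"
  defines "B2 \<equiv> \<lambda>n. (B (n+N) - B n) div q"
  shows "q^3 dvd H (n + k*N) - H n - int k * q * B n - (\<Sum>i<k. int i) * q^2 * B2 n"
proof -
  have rB: "recs B" unfolding B_def by (rule per_recs[OF pq r])
  have rB2: "recs B2" unfolding B2_def by (rule per_recs[OF pq rB])
  have hB: "H (n+N) = H n + q * B n" for n unfolding B_def by (rule per_eq[OF pq r])
  have hB2: "B (n+N) = B n + q * B2 n" for n unfolding B2_def by (rule per_eq[OF pq rB])
  have d3: "q dvd B2 (n+N) - B2 n" for n using pq rB2 unfolding per_def by blast
  show ?thesis
  proof (induction k arbitrary: n)
    case 0 then show ?case by simp
  next
    case (Suc k)
    let ?c = "(\<Sum>i<k. int i)"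
    have e: "n + Suc k * N = (n + N) + k*N" by simp
    have "H (n + Suc k * N) - H n - int (Suc k) * q * B n - (\<Sum>i<Suc k. int i) * q^2 * B2 n
       = (H ((n + N) + k*N) - H (n+N) - int k * q * B (n+N) - ?c * q^2 * B2 (n+N))
         + q^2 * (?c * (B2 (n+N) - B2 n))"
      unfolding e using hB[of n] hB2[of n] by (simp add: algebra_simps power2_eq_square)
    moreover have "q^3 dvd q^2 * (?c * (B2 (n+N) - B2 n))"
      using d3[of n] by (simp add: power_numeral_reduce mult_dvd_mono)
    ultimately show ?case using Suc[of "n+N"] by (metis dvd_add)
  qed
qed

lemma lift2:
  assumes pq: "per q N" and r: "recs H"
  shows "q^2 dvd H (n + k*N) - H n - int k * q * ((H (n+N) - H n) div q)"
proof -
  define B where "B = (\<lambda>n. (H (n+N) - H n) div q)"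
  define B2 where "B2 = (\<lambda>n. (B (n+N) - B n) div q)"
  have "q^3 dvd H (n + k*N) - H n - int k * q * B n - (\<Sum>i<k. int i) * q^2 * B2 n"
    unfolding B_def B2_def by (rule lift[OF pq r])
  moreover have "q^2 dvd q^3" by (simp add: le_imp_power_dvd)
  ultimately have "q^2 dvd H (n + k*N) - H n - int k * q * B n - (\<Sum>i<k. int i) * q^2 * B2 n"
    using dvd_trans by blast
  moreover have "q^2 dvd (\<Sum>i<k. int i) * q^2 * B2 n" by simp
  ultimately show ?thesis unfolding B_def by (metis diff_add_cancel dvd_add)
qed

lemma lift_prime:
  assumes pq: "per q N" and "p dvd q" "p \<ge> 0"
  shows "per (p*q) (nat p * N)"
  unfolding per_def
proof (intro allI impI)
  fix H n assume r: "recs H"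
  have "q^2 dvd H (n + nat p*N) - H n - int (nat p) * q * ((H (n+N) - H n) div q)"
    by (rule lift2[OF pq r])
  moreover have "p * q dvd q^2" using assms(2) by (simp add: power2_eq_square)
  ultimately have "p*q dvd H (n + nat p*N) - H n - p * q * ((H (n+N) - H n) div q)"
    using dvd_trans assms(3) by auto
  then show "p*q dvd H (n + nat p*N) - H n" by (metis diff_add_cancel dvd_add dvd_triv_left mult.assoc)
qed

definition P5 :: "nat \<Rightarrow> nat \<Rightarrow> bool" where
  "P5 j N \<longleftrightarrow> per (5^j) N \<and> (\<forall>H. recs H \<longrightarrow> (\<forall>n. 5 dvd (H (n+N) - H n) div 5^j - 3 * (H (Suc n) - 3 * H n)))"

lemma P5_base: "P5 1 20"
  unfolding P5_def
proof (intro conjI allI impI)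
  have "fp 21 = (10946, 17711)" by (simp add: eval_nat_numeral)
  then have "fi 21 = 10946" using fp_fi[of 21] by simp
  then have h2: "fi (20+1) = 10946" by (simp only: numeral_plus_one semiring_norm)
  have "(5::int)^1 dvd 6765" "(5::int)^1 dvd 10946 - 1" by simp_all
  then show "per (5^1) 20" by (intro per_fib) (simp_all only: fi_20 h2)
next
  fix H n assume r: "recs H"
  have "H (n + 19 + 1) = fi 19 * H n + fi (19+1) * H (n+1)" by (rule rec_shift[OF r])
  moreover have "n+19+1 = n+20" "(19::nat)+1 = 20" by simp_all
  ultimately have "H (n + 20) = fi 19 * H n + fi 20 * H (n+1)" by (simp only:)
  then have "H (n + 20) - H n = 5 * (836 * H n + 1353 * H (Suc n))" using fi_19 fi_20 by simp
  then have "(H (n + 20) - H n) div 5^1 - 3 * (H (Suc n) - 3 * H n) = 5 * (169 * H n + 270 * H (Suc n))"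
    by simp
  then show "5 dvd (H (n + 20) - H n) div 5^1 - 3 * (H (Suc n) - 3 * H n)" by simp
qed

lemma P5_step:
  assumes "P5 j N" "j \<ge> 1"
  shows "P5 (Suc j) (5*N)"
proof -
  define q :: int where "q = 5^j"
  have pq: "per q N" using assms unfolding P5_def q_def by simp
  define r :: int where "r = 5^(j-1)"
  have qr: "q = 5 * r" unfolding q_def r_def using assms(2) by (cases j) simp_all
  have key: "25 * q dvd H (n + 5*N) - H n - 5 * q * ((H (n+N) - H n) div q)" if r0: "recs H" for H n
  proof -
    define B where "B = (\<lambda>n. (H (n+N) - H n) div q)"
    define B2 where "B2 = (\<lambda>n. (B (n+N) - B n) div q)"
    define A where "A = H (n + 5*N) - H n - 5 * q * B n"
    have "q^3 dvd H (n + 5*N) - H n - int 5 * q * B n - (\<Sum>i<5. int i) * q^2 * B2 n"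
      unfolding B_def B2_def by (rule lift[OF pq r0])
    moreover have "(\<Sum>i<5. int i) = 10" by (simp add: eval_nat_numeral)
    ultimately have "q^3 dvd A - 10 * q^2 * B2 n" unfolding A_def by simp
    moreover have "25 * q dvd q^3" unfolding qr by (simp add: power3_eq_cube)
    ultimately have "25 * q dvd A - 10 * q^2 * B2 n" using dvd_trans by blast
    moreover have "25 * q dvd 10 * q^2 * B2 n" unfolding qr by (simp add: power2_eq_square)
    ultimately have "25 * q dvd (A - 10 * q^2 * B2 n) + 10 * q^2 * B2 n" by (rule dvd_add)
    then show ?thesis unfolding A_def B_def by simp
  qed
  show ?thesis unfolding P5_def
  proof (intro conjI allI impI)
    show "per (5 ^ Suc j) (5 * N)" unfolding per_def
    proof (intro allI impI)
      fix H n assume r0: "recs H"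
      define A where "A = H (n + 5*N) - H n - 5 * q * ((H (n+N) - H n) div q)"
      have "5 * q dvd 25 * q" by simp
      then have "5 * q dvd A" using key[OF r0, of n] unfolding A_def by (rule dvd_trans)
      moreover have "5 * q dvd 5 * q * ((H (n+N) - H n) div q)" by simp
      ultimately have "5 * q dvd A + 5 * q * ((H (n+N) - H n) div q)" by (rule dvd_add)
      then show "5 ^ Suc j dvd H (n + 5 * N) - H n" unfolding A_def q_def by simp
    qed
  next
    fix H n assume r0: "recs H"
    define X where "X = H (n + 5*N) - H n"
    define B where "B = (H (n+N) - H n) div q"
    obtain t where t: "X - 5 * q * B = 25 * q * t" using key[OF r0, of n] unfolding X_def B_def by blast
    have q0: "q \<noteq> 0" unfolding q_def by simp
    have "X div (5 * q) = B + 5 * t"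
    proof -
      have "X = (5 * q) * (B + 5 * t)" using t by (simp add: algebra_simps)
      then show ?thesis using q0 by simp
    qed
    moreover have "5 dvd B - 3 * (H (Suc n) - 3 * H n)" using assms(1) r0 unfolding P5_def B_def q_def by blast
    moreover have "5 dvd 5 * t" by simp
    ultimately have "5 dvd (B - 3 * (H (Suc n) - 3 * H n)) + 5 * t" using dvd_add by blast
    then have "5 dvd X div (5 * q) - 3 * (H (Suc n) - 3 * H n)"
      using \<open>X div (5 * q) = B + 5 * t\<close> by (simp add: algebra_simps)
    then show "5 dvd (H (n + 5 * N) - H n) div 5 ^ Suc j - 3 * (H (Suc n) - 3 * H n)"
      unfolding X_def q_def by (simp add: mult.commute)
  qed
qed

lemma P5_all: "j \<ge> 1 \<Longrightarrow> P5 j (20 * 5^(j-1))"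
proof (induction j)
  case 0 then show ?case by simp
next
  case (Suc j)
  show ?case
  proof (cases "j = 0")
    case True then show ?thesis using P5_base by simp
  next
    case False
    then have "P5 j (20 * 5^(j-1))" using Suc by simp
    then have "P5 (Suc j) (5 * (20 * 5^(j-1)))" by (rule P5_step) (use False in simp)
    moreover have "5 * (20 * 5^(j-1)) = (20 * 5^(Suc j - 1) :: nat)" using False
      by (cases j) simp_all
    ultimately show ?thesis by (simp only:)
  qed
qed

lemma gib_recs: "recs (gib_aux a b)"
  unfolding recs_def by simp

lemma gib_inv: "gib_aux a b (Suc n)^2 - gib_aux a b (Suc n) * gib_aux a b n - gib_aux a b n ^ 2
   = (-1)^n * (b^2 - a*b - a^2)"
proof (induction n)
  case 0 then show ?case by (simp add: algebra_simps)
next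
  case (Suc n)
  have "gib_aux a b (Suc (Suc n))^2 - gib_aux a b (Suc (Suc n)) * gib_aux a b (Suc n) - gib_aux a b (Suc n) ^ 2
     = - (gib_aux a b (Suc n)^2 - gib_aux a b (Suc n) * gib_aux a b n - gib_aux a b n ^ 2)"
    by (simp add: algebra_simps power2_eq_square)
  then show ?case using Suc by simp
qed

lemma gib_nz:
  assumes "\<not> [a^2 + a*b - b^2 = 0] (mod 5)"
  shows "\<not> 5 dvd gib_aux a b (Suc n) - 3 * gib_aux a b n"
proof
  let ?x = "gib_aux a b (Suc n)" and ?y = "gib_aux a b n"
  assume "5 dvd ?x - 3 * ?y"
  then have "5 dvd (?x - 3 * ?y)^2" by (simp add: power2_eq_square)
  moreover have "(?x - 3 * ?y)^2 = (?x^2 - ?x * ?y - ?y^2) + 5 * (2 * ?y^2 - ?x * ?y)"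
    by (simp add: algebra_simps power2_eq_square)
  ultimately have "5 dvd ?x^2 - ?x * ?y - ?y^2" by (metis dvd_add_left_iff dvd_triv_left)
  then have "5 dvd (-1)^n * (b^2 - a*b - a^2)" using gib_inv[of a b n] by simp
  then have "5 dvd (-1)^n * ((-1)^n * (b^2 - a*b - a^2))" by (rule dvd_mult)
  moreover have "(-1::int)^n * (-1)^n = 1" by (simp add: power_mult_distrib[symmetric])
  moreover have "(-1::int)^n * ((-1)^n * (b^2 - a*b - a^2)) = ((-1)^n * (-1)^n) * (b^2 - a*b - a^2)"
    by (rule mult.assoc[symmetric])
  ultimately have "5 dvd (b^2 - a*b - a^2)" by simp
  then have "5 dvd a^2 + a*b - b^2" by (metis dvd_minus_iff minus_diff_eq diff_diff_eq diff_minus_eq_add add.commute)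
  then show False using assms by (simp add: cong_0_iff)
qed



lemma incomplete:
  assumes pq: "per q N" and N1: "1 \<le> N" and Nq: "int N < q"
  shows "\<not> complete_mod (G a b) q"
proof
  assume c: "complete_mod (G a b) q"
  let ?H = "gib_aux a b"
  have hm: "?H n mod q = ?H (n mod N) mod q" for n
  proof -
    have "q dvd ?H (n mod N + (n div N) * N) - ?H (n mod N)"
      using per_mult[OF pq, of "n div N"] gib_recs unfolding per_def by blast
    then have "q dvd ?H n - ?H (n mod N)" by (metis mod_div_decomp add.commute)
    then show ?thesis by (simp add: mod_eq_dvd_iff)
  qed
  define R where "R = (\<lambda>i. ?H i mod q) ` {..<N}"
  have "card R \<le> N" unfolding R_def using card_image_le[of "{..<N}"] by simp
  moreover have "card {0..<q} = nat q" by simp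
  moreover have "finite R" unfolding R_def by simp
  ultimately have "\<not> {0..<q} \<subseteq> R"
  proof (intro notI)
    assume cR: "card R \<le> N" and cq: "card {0..<q} = nat q" and fR: "finite R" and sub: "{0..<q} \<subseteq> R"
    have "card {0..<q} \<le> card R" by (rule card_mono[OF fR sub])
    then have "nat q \<le> N" using cR cq by simp
    then have "q \<le> int N" by (simp add: nat_le_iff)
    then show False using Nq by simp
  qed
  then obtain r where r: "r \<in> {0..<q}" "r \<notin> R" by blast
  obtain n where n: "n \<ge> 1" "[G a b n = r] (mod q)" using c unfolding complete_mod_def by blast
  have "?H (n-1) mod q = r mod q" using n unfolding G_def cong_def by simp
  also have "\<dots> = r" using r by simp
  finally have "?H ((n-1) mod N) mod q = r" using hm by simp
  moreover have "(n-1) mod N < N" using N1 by simp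
  ultimately have "r \<in> R" unfolding R_def by force
  then show False using r by blast
qed



lemma fib_binom:
  "2^n * fi n = 2 * (\<Sum>k\<le>n. int (n choose k) * (if odd k then 5^(k div 2) else 0))"
proof -
  define s where "s = sqrt (5::real)"
  have s2: "s^2 = 5" unfolding s_def by simp
  have s0: "s \<noteq> 0" unfolding s_def by simp
  have pw: "s^k - (-s)^k = 2 * s * (if odd k then 5^(k div 2) else 0)" for k
  proof (cases "even k")
    case True then show ?thesis by simp
  next
    case False
    then obtain m where k: "k = 2*m + 1" by (metis oddE)
    have "s^k = s * (s^2)^m" unfolding k power_add power_mult by simp
    then have "s^k = s * 5^m" using s2 by simp
    moreover have "(-s)^k = - (s^k)" using False by simp
    moreover have "k div 2 = m" unfolding k by simp
    ultimately show ?thesis using False by simp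
  qed
  have e1: "(1+s)^n = (\<Sum>k\<le>n. real (n choose k) * s^k)"
    using binomial_ring[of s 1 n] by (simp add: add.commute)
  have e2: "(1-s)^n = (\<Sum>k\<le>n. real (n choose k) * (-s)^k)"
    using binomial_ring[of "-s" 1 n] by simp
  have "(1+s)^n - (1-s)^n = (\<Sum>k\<le>n. real (n choose k) * (s^k - (-s)^k))"
    unfolding e1 e2 by (simp add: sum_subtractf[symmetric] algebra_simps)
  also have "\<dots> = 2 * s * (\<Sum>k\<le>n. real (n choose k) * (if odd k then 5^(k div 2) else 0))"
    unfolding pw by (simp add: sum_distrib_left algebra_simps)
  finally have d: "(1+s)^n - (1-s)^n = 2 * s * (\<Sum>k\<le>n. real (n choose k) * (if odd k then 5^(k div 2) else 0))" .
  have "real (fib n) = (((1+s)/2)^n - ((1-s)/2)^n) / s"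
    unfolding s_def by (rule fib_closed_form)
  then have "2^n * real (fib n) * s = (1+s)^n - (1-s)^n"
    using s0 by (simp add: power_divide field_simps)
  then have "(2^n * real (fib n)) * s = (2 * (\<Sum>k\<le>n. real (n choose k) * (if odd k then 5^(k div 2) else 0))) * s"
    using d by (simp only: mult_ac)
  then have "2^n * real (fib n) = 2 * (\<Sum>k\<le>n. real (n choose k) * (if odd k then 5^(k div 2) else 0))"
    using s0 by (simp only: mult_cancel_right) simp
  then have "real_of_int (2^n * fi n) = real_of_int (2 * (\<Sum>k\<le>n. int (n choose k) * (if odd k then 5^(k div 2) else 0)))"
    by (simp add: fi_fib of_int_sum if_distrib cong: if_cong)
  then show ?thesis by (rule of_int_eq_iff[THEN iffD1])
qed



definition ff :: "nat \<Rightarrow> int" where "ff k = (if odd k then 5^(k div 2) else 0)"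

lemma fib_binom': "2^n * fi n = 2 * (\<Sum>k\<le>n. int (n choose k) * ff k)"
  unfolding ff_def by (rule fib_binom)

lemma Sp_mod:
  assumes p: "prime p" "odd p"
  shows "int p dvd (\<Sum>k\<le>p. int (p choose k) * ff k) - 5^((p-1) div 2)"
proof -
  have p1: "p > 1" using p prime_gt_1_nat by blast
  have "(\<Sum>k\<le>p. int (p choose k) * ff k) - 5^((p-1) div 2)
      = (\<Sum>k\<le>p. int (p choose k) * ff k - (if k = p then 5^((p-1) div 2) else 0))"
    by (simp add: sum_subtractf)
  also have "int p dvd \<dots>"
  proof (rule dvd_sum)
    fix k assume k: "k \<in> {..p}"
    show "int p dvd int (p choose k) * ff k - (if k = p then 5^((p-1) div 2) else 0)"
    proof (cases "k = 0 \<or> k = p")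
      case True
      then show ?thesis
      proof
        assume "k = 0" then show ?thesis using p1 by (simp add: ff_def)
      next
        assume "k = p"
        moreover have "p div 2 = (p-1) div 2" using p(2) by (elim oddE) simp
        ultimately show ?thesis using p(2) by (simp add: ff_def)
      qed
    next
      case False
      then have "p dvd p choose k" using k p1 p(1) by (intro dvd_choose_prime) auto
      then have "int p dvd int (p choose k)" by simp
      then show ?thesis using False by simp
    qed
  qed
  finally show ?thesis .
qed

lemma Sp1_mod:
  assumes p: "prime p" "odd p"
  shows "int p dvd (\<Sum>k\<le>p+1. int ((p+1) choose k) * ff k) - (int p + 1) * (1 + 5^((p-1) div 2))"
proof -
  have p1: "p > 2" using p prime_ge_2_nat[of p] by (cases "p = 2") auto
  define sp where "sp = (\<lambda>k::nat. (if k = 1 then int p + 1 else 0) + (if k = p then (int p + 1) * 5^((p-1) div 2) else 0))"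
  have "(\<Sum>k\<le>p+1. sp k) = (int p + 1) * (1 + 5^((p-1) div 2))"
    unfolding sp_def using p1 by (simp add: sum.distrib algebra_simps)
  then have "(\<Sum>k\<le>p+1. int ((p+1) choose k) * ff k) - (int p + 1) * (1 + 5^((p-1) div 2))
      = (\<Sum>k\<le>p+1. int ((p+1) choose k) * ff k - sp k)"
    by (simp add: sum_subtractf)
  also have "int p dvd \<dots>"
  proof (rule dvd_sum)
    fix k assume k: "k \<in> {..p+1}"
    have pd: "p div 2 = (p-1) div 2" using p(2) by (elim oddE) simp
    consider "k = 0" | "k = 1" | "k = p" | "k = p + 1" | "1 < k \<and> k < p" using k by fastforce
    then show "int p dvd int ((p+1) choose k) * ff k - sp k"
    proof cases
      case 1 then show ?thesis using p1 by (simp add: ff_def sp_def)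
    next
      case 2 then show ?thesis using p1 by (simp add: ff_def sp_def)
    next
      case 3 then show ?thesis using p1 p(2) pd by (simp add: ff_def sp_def add.commute)
    next
      case 4 then show ?thesis using p1 p(2) by (simp add: ff_def sp_def)
    next
      case 5
      then obtain j where j0: "k = Suc j" by (cases k) auto
      then have j: "k = Suc j" "0 < j" "j < p" using 5 by auto
      have "p dvd p choose j" using j p p1 by (intro dvd_choose_prime) auto
      moreover have "p dvd p choose Suc j" using j 5 p p1 by (intro dvd_choose_prime) auto
      ultimately have "p dvd (p+1) choose k" using j by simp
      then have "int p dvd int ((p+1) choose k)" by simp
      moreover have "sp k = 0" using 5 by (simp add: sp_def)
      ultimately show ?thesis by simp
    qed
  qed
  finally show ?thesis .
qed



lemma odd_cancel:
  assumes "odd p" "int p dvd 2 * x"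
  shows "int p dvd x"
proof -
  obtain m where m: "p = 2*m + 1" using assms(1) by (elim oddE) simp
  have "x = (int m + 1) * (2 * x) - int p * x" unfolding m by (simp add: algebra_simps)
  then show ?thesis using assms(2) by (metis dvd_diff dvd_mult dvd_triv_left)
qed

lemma fib_p:
  assumes p: "prime p" "odd p"
  shows "int p dvd fi p - 5^((p-1) div 2)" and "int p dvd 2 * fi (p+1) - 1 - 5^((p-1) div 2)"
proof -
  have p2: "p > 2" using p prime_ge_2_nat[of p] by (cases "p = 2") auto
  have "\<not> p dvd 2" using p2 by (simp add: nat_dvd_not_less)
  then have "[2^(p-1) = 1] (mod p)" using fermat_theorem[OF p(1), of 2] by simp
  then have "[int (2^(p-1)) = int 1] (mod int p)" using cong_int_iff by blast
  then have ferm: "int p dvd 2^(p-1) - 1" by (simp add: cong_iff_dvd_diff)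
  define u :: int where "u = 2^(p-1)"
  define e :: int where "e = 5^((p-1) div 2)"
  define S where "S = (\<Sum>k\<le>p. int (p choose k) * ff k)"
  define S1 where "S1 = (\<Sum>k\<le>p+1. int ((p+1) choose k) * ff k)"
  have hp: "(2::int)^p = 2 * u" unfolding u_def using p2 by (metis Suc_diff_1 less_trans pos2 power_Suc zero_less_numeral)
  have hp1: "(2::int)^(p+1) = 4 * u" using hp by simp
  have b1: "2 * u * fi p = 2 * S" using fib_binom'[of p] hp unfolding S_def by simp
  have b2: "4 * u * fi (p+1) = 2 * S1" using fib_binom'[of "p+1"] hp1 unfolding S1_def by simp
  have m1: "int p dvd S - e" unfolding S_def e_def by (rule Sp_mod[OF p])
  have m2: "int p dvd S1 - (int p + 1) * (1 + e)" unfolding S1_def e_def by (rule Sp1_mod[OF p])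
  have m2': "int p dvd S1 - (1 + e)"
  proof -
    have "S1 - (1 + e) = (S1 - (int p + 1) * (1 + e)) + int p * (1 + e)" by (simp add: algebra_simps)
    then show ?thesis using m2 by (metis dvd_add dvd_triv_left)
  qed
  have fu: "int p dvd u - 1" using ferm unfolding u_def .
  have b1': "S = u * fi p" using b1 by simp
  have "2 * (fi p - e) = 2 * (S - e) - 2 * fi p * (u - 1)"
    unfolding b1' by (simp add: algebra_simps)
  then have "int p dvd 2 * (fi p - e)" using m1 fu by (metis dvd_diff dvd_mult dvd_mult2)
  then show "int p dvd fi p - 5^((p-1) div 2)" using odd_cancel[OF p(2)] unfolding e_def by blast
  have b2': "S1 = 2 * u * fi (p+1)" using b2 by simp
  have "2 * (2 * fi (p+1) - 1 - e) = 2 * (S1 - (1 + e)) - 4 * fi (p+1) * (u - 1)"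
    unfolding b2' by (simp add: algebra_simps)
  then have "int p dvd 2 * (2 * fi (p+1) - 1 - e)" using m2' fu by (metis dvd_diff dvd_mult dvd_mult2)
  then show "int p dvd 2 * fi (p+1) - 1 - 5^((p-1) div 2)" using odd_cancel[OF p(2)] unfolding e_def by blast
qed



lemma prime5: "prime (5::nat)"
proof -
  have "\<forall>n\<in>{2..<5}. \<not> n dvd (5::nat)"
  proof
    fix n :: nat assume "n \<in> {2..<5}"
    then have "n = 2 \<or> n = 3 \<or> n = 4" by auto
    then show "\<not> n dvd 5" by auto
  qed
  then show ?thesis by (simp add: prime_nat_iff')
qed

lemma prime_case:
  assumes p: "prime p" "p \<noteq> 5" and c: "complete_mod (G a b) (int p)"
  shows "\<exists>N. per (int p) N \<and> \<not> 5 dvd N"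
proof (cases "p = 2")
  case True
  have "fi 3 = 2" "fi 4 = 3" by (simp_all add: eval_nat_numeral)
  then have "per 2 3" by (intro per_fib) simp_all
  then show ?thesis using True by (intro exI[of _ 3]) simp
next
  case False
  have p2: "p > 2" using p prime_ge_2_nat[of p] False by linarith
  have op: "odd p" using p(1) False prime_odd_nat p2 by blast
  define e :: int where "e = 5^((p-1) div 2)"
  have f1: "int p dvd fi p - e" and f2: "int p dvd 2 * fi (p+1) - 1 - e"
    using fib_p[OF p(1) op] unfolding e_def by auto
  have eu: "[Legendre 5 (int p) = e] (mod int p)" unfolding e_def using euler_criterion[OF p(1) p2] by simp
  have n5: "\<not> [5 = 0] (mod int p)"
  proof
    assume "[5 = 0] (mod int p)"
    then have "int p dvd 5" by (simp add: cong_0_iff)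
    then have "p dvd 5" by presburger
    then show False using primes_dvd_imp_eq[OF p(1) prime5] p(2) by blast
  qed
  have fsuc: "fi (p+1) = fi (p-1) + fi p" using p2 by (metis Suc_diff_1 add.commute fi.simps(3) less_trans pos2 plus_1_eq_Suc)
  have "Legendre 5 (int p) = 1 \<or> Legendre 5 (int p) = -1" using n5 unfolding Legendre_def by auto
  then show ?thesis
  proof
    assume L: "Legendre 5 (int p) = 1"
    then have e1: "int p dvd e - 1" using eu by (simp add: cong_iff_dvd_diff dvd_diff_commute)
    have g1: "int p dvd fi p - 1"
    proof -
      have "fi p - 1 = (fi p - e) + (e - 1)" by simp
      then show ?thesis using f1 e1 by (metis dvd_add)
    qed
    have "int p dvd 2 * (fi (p+1) - 1)"
    proof -
      have "2 * (fi (p+1) - 1) = (2 * fi (p+1) - 1 - e) + (e - 1)" by simp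
      then show ?thesis using f2 e1 by (metis dvd_add)
    qed
    then have g2: "int p dvd fi (p+1) - 1" by (rule odd_cancel[OF op])
    have g0: "int p dvd fi (p-1)"
    proof -
      have "fi (p-1) = (fi (p+1) - 1) - (fi p - 1)" using fsuc by simp
      then show ?thesis using g1 g2 by (metis dvd_diff)
    qed
    have "per (int p) (p-1)" using g0 g1 p2 by (intro per_fib) simp_all
    then have "\<not> complete_mod (G a b) (int p)" by (rule incomplete) (use p2 in auto)
    then show ?thesis using c by blast
  next
    assume L: "Legendre 5 (int p) = -1"
    then have e1: "int p dvd e + 1" using eu by (simp add: cong_iff_dvd_diff dvd_diff_commute)
    have g1: "int p dvd fi p + 1"
    proof -
      have "fi p + 1 = (fi p - e) + (e + 1)" by simp
      then show ?thesis using f1 e1 by (metis dvd_add)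
    qed
    have "int p dvd 2 * fi (p+1)"
    proof -
      have "2 * fi (p+1) = (2 * fi (p+1) - 1 - e) + (e + 1)" by simp
      then show ?thesis using f2 e1 by (metis dvd_add)
    qed
    then have g2: "int p dvd fi (p+1)" by (rule odd_cancel[OF op])
    have per: "per (int p) (2*(p+1))" using g1 g2 by (intro per_anti) simp_all
    have "\<not> 5 dvd 2*(p+1)"
    proof
      assume "5 dvd 2*(p+1)"
      then have pm: "int p mod 5 = 4" by presburger
      have "QuadRes 5 (int p)" unfolding QuadRes_def
        by (rule exI[of _ 2]) (use pm in \<open>simp add: cong_def\<close>)
      moreover have "\<not> [int p = 0] (mod 5)" using pm by (simp add: cong_def)
      ultimately have "Legendre (int p) 5 = 1" unfolding Legendre_def by simp
      moreover have "Legendre (int p) (int 5) * Legendre (int 5) (int p) = (-1) ^ ((p - 1) div 2 * ((5 - 1) div 2))"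
        by (rule Quadratic_Reciprocity[OF p(1) p2 prime5]) (use p(2) in auto)
      ultimately show False using L by simp
    qed
    then show ?thesis using per by blast
  qed
qed



lemma complete_dvd: "complete_mod s q \<Longrightarrow> d dvd q \<Longrightarrow> complete_mod s d"
  unfolding complete_mod_def using cong_dvd_modulus by blast

lemma prime5i: "prime (5::int)"
  using prime5 prime_nat_int_transfer[of 5] by simp

lemma coprime_part:
  fixes q :: int
  shows "q \<ge> 1 \<Longrightarrow> \<not> 5 dvd q \<Longrightarrow> complete_mod (G a b) q \<Longrightarrow> \<exists>N. per q N \<and> \<not> 5 dvd N"
proof (induction "nat q" arbitrary: q rule: less_induct)
  case less
  show ?case
  proof (cases "q = 1")
    case True
    have "per 1 1" unfolding per_def by simp
    then show ?thesis using True by (intro exI[of _ 1]) simp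
  next
    case False
    then have "\<bar>q\<bar> \<noteq> 1" using less.prems by simp
    then obtain p where p: "prime p" "p dvd q" using prime_factor_int by blast
    have p1: "p > 1" using p(1) prime_gt_1_int by blast
    obtain r where qr: "q = p * r" using p(2) by blast
    have r0: "r > 0" using qr less.prems(1) p1 zero_less_mult_pos[of p r] by simp
    have rq: "r < q" using qr p1 r0 by (simp add: mult_less_cancel_right1)
    have rd: "r dvd q" using qr by simp
    have r5: "\<not> 5 dvd r" using less.prems(2) rd dvd_trans by blast
    have cr: "complete_mod (G a b) r" using complete_dvd[OF less.prems(3) rd] .
    obtain N1 where N1: "per r N1" "\<not> 5 dvd N1"
      using less.hyps[of r] rq r0 r5 cr by auto
    have pn: "prime (nat p)" using p(1) by (simp add: prime_int_iff)
    have pp: "int (nat p) = p" using p1 by simp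
    have p5: "nat p \<noteq> 5"
    proof
      assume "nat p = 5" then have "p = 5" using pp by simp
      then show False using p(2) less.prems(2) by simp
    qed
    have p5': "\<not> 5 dvd nat p" using primes_dvd_imp_eq[OF prime5 pn] p5 by metis
    show ?thesis
    proof (cases "p dvd r")
      case True
      have "per (p * r) (nat p * N1)" by (rule lift_prime[OF N1(1) True]) (use p1 in simp)
      moreover have "\<not> 5 dvd nat p * N1" using p5' N1(2) prime5 by (simp add: prime_dvd_mult_iff)
      ultimately show ?thesis using qr by blast
    next
      case False
      have cop: "coprime p r" using prime_imp_coprime[OF p(1) False] .
      have cp: "complete_mod (G a b) (int (nat p))" using complete_dvd[OF less.prems(3) p(2)] pp by simp
      obtain N2 where N2: "per (int (nat p)) N2" "\<not> 5 dvd N2" using prime_case[OF pn p5 cp] by blast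
      have "per p (N1 * N2)" using per_mult[OF N2(1), of N1] pp by simp
      moreover have "per r (N1 * N2)" using per_mult[OF N1(1), of N2] by (simp add: mult.commute)
      ultimately have "per (p * r) (N1 * N2)" using cop by (rule per_coprime)
      moreover have "\<not> 5 dvd N1 * N2" using N1(2) N2(2) prime5 by (simp add: prime_dvd_mult_iff)
      ultimately show ?thesis using qr by blast
    qed
  qed
qed

lemma decomp5:
  fixes q :: int
  shows "q \<ge> 1 \<Longrightarrow> \<exists>e m'. q = 5^e * m' \<and> \<not> 5 dvd m' \<and> m' \<ge> 1"
proof (induction "nat q" arbitrary: q rule: less_induct)
  case less
  show ?case
  proof (cases "5 dvd q")
    case False then show ?thesis using less.prems by (intro exI[of _ 0] exI[of _ q]) auto
  next
    case True
    then obtain q' where q': "q = 5 * q'" by blast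
    have "q' \<ge> 1" using q' less.prems by simp
    moreover have "nat q' < nat q" using q' less.prems by simp
    ultimately obtain e m' where "q' = 5^e * m'" "\<not> 5 dvd m'" "m' \<ge> 1" using less.hyps by blast
    then show ?thesis using q' by (intro exI[of _ "Suc e"] exI[of _ m']) simp
  qed
qed

lemma unit5: "\<not> 5 dvd (h::int) \<Longrightarrow> 5 dvd h^4 - 1"
proof -
  assume h: "\<not> 5 dvd h"
  have "h mod 5 \<in> {1,2,3,4}" using h by (auto simp: dvd_eq_mod_eq_0)
  then have "(h mod 5)^4 mod 5 = 1" by auto
  then have "h^4 mod 5 = 1" by (simp add: power_mod)
  then show ?thesis by (simp add: mod_eq_dvd_iff[symmetric])
qed



theorem mainTheorem18:
  fixes a b m :: int
  assumes "gcd a b = 1"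
    and "\<not> [a^2 + a*b - b^2 = 0] (mod 5)"
    and "m \<ge> 1" and "5 dvd m"
    and "complete_mod (G a b) m"
  shows "complete_mod (G a b) (5*m)"
proof -
  let ?H = "gib_aux a b"
  have rH: "recs ?H" by (rule gib_recs)
  obtain e m' where em: "m = 5^e * m'" "\<not> 5 dvd m'" "m' \<ge> 1" using decomp5[OF assms(3)] by blast
  have e1: "e \<ge> 1"
  proof (rule ccontr)
    assume "\<not> e \<ge> 1" then have "e = 0" by simp
    then show False using em assms(4) by simp
  qed
  define q :: int where "q = 5^e"
  have mq: "m = q * m'" using em unfolding q_def by simp
  have cm': "complete_mod (G a b) m'" using complete_dvd[OF assms(5)] mq by simp
  obtain N1 where N1: "per m' N1" "\<not> 5 dvd N1" using coprime_part[OF em(3) em(2) cm'] by blast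
  define N5 :: nat where "N5 = 20 * 5^(e-1)"
  have P: "P5 e N5" unfolding N5_def using P5_all[OF e1] .
  have perq: "per q N5" using P unfolding P5_def q_def by simp
  define N where "N = N1 * N5"
  have cop: "coprime q m'" unfolding q_def using em(2) prime5i
    by (simp add: coprime_power_left_iff prime_imp_coprime)
  have perm: "per m N"
  proof -
    have "per q N" unfolding N_def by (rule per_mult[OF perq])
    moreover have "per m' N" unfolding N_def using per_mult[OF N1(1), of N5] by (simp add: mult.commute)
    ultimately show ?thesis unfolding mq using cop by (rule per_coprime)
  qed
  have q5: "5 dvd q" unfolding q_def using e1 by (simp add: dvd_power)
  have q0: "q \<noteq> 0" unfolding q_def by simp
  define h where "h = (\<lambda>n. (?H (n+N) - ?H n) div m)"
  have hnz: "\<not> 5 dvd h n" for n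
  proof
    assume h5: "5 dvd h n"
    define B where "B = (?H (n+N5) - ?H n) div q"
    have l: "q^2 dvd ?H (n + N1*N5) - ?H n - int N1 * q * B"
      unfolding B_def by (rule lift2[OF perq rH])
    have "?H (n+N) - ?H n = m * h n"
      unfolding h_def using perm rH unfolding per_def by simp
    then have "?H (n + N1*N5) - ?H n - int N1 * q * B = q * (m' * h n - int N1 * B)"
      unfolding N_def mq by (simp add: algebra_simps)
    moreover have "q * 5 dvd q^2" using q5 by (simp add: power2_eq_square)
    ultimately have "q * 5 dvd q * (m' * h n - int N1 * B)" using l by (metis dvd_trans)
    then have "5 dvd m' * h n - int N1 * B" using q0 by simp
    moreover have "5 dvd m' * h n" using h5 by simp
    ultimately have "5 dvd m' * h n - (m' * h n - int N1 * B)" using dvd_diff by blast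
    then have "5 dvd int N1 * B" by simp
    moreover have "\<not> (5::int) dvd int N1" using N1(2) by presburger
    ultimately have "5 dvd B" using prime5i by (simp add: prime_dvd_mult_iff)
    moreover have "5 dvd B - 3 * (?H (Suc n) - 3 * ?H n)" using P rH unfolding P5_def B_def q_def by blast
    ultimately have "5 dvd B - (B - 3 * (?H (Suc n) - 3 * ?H n))" using dvd_diff by blast
    then have "5 dvd 3 * (?H (Suc n) - 3 * ?H n)" by simp
    moreover have "\<not> (5::int) dvd 3" by simp
    ultimately have "5 dvd (?H (Suc n) - 3 * ?H n)" using prime5i prime_dvd_mult_iff by blast
    then show False using gib_nz[OF assms(2)] by blast
  qed
  show ?thesis unfolding complete_mod_def
  proof
    fix r :: int
    obtain n0 where n0: "n0 \<ge> 1" "[G a b n0 = r] (mod m)" using assms(5) unfolding complete_mod_def by blast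
    define i where "i = n0 - 1"
    have "m dvd r - ?H i" using n0 unfolding G_def i_def by (simp add: cong_iff_dvd_diff dvd_diff_commute)
    then obtain t where t: "r - ?H i = m * t" by blast
    define hh where "hh = h i"
    define k where "k = nat ((t * hh^3) mod 5)"
    have kk: "int k = (t * hh^3) mod 5" unfolding k_def by simp
    have "5 dvd int k * hh - t"
    proof -
      have "5 dvd int k - t * hh^3" unfolding kk by (simp add: mod_eq_dvd_iff[symmetric] dvd_diff_commute)
      then have a1: "5 dvd (int k - t * hh^3) * hh" by simp
      have "5 dvd hh^4 - 1" using unit5 hnz unfolding hh_def by blast
      then have a2: "5 dvd t * (hh^4 - 1)" by simp
      have "int k * hh - t = (int k - t * hh^3) * hh + t * (hh^4 - 1)"
        by (simp add: algebra_simps power_numeral_reduce)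
      then show ?thesis using a1 a2 by (metis dvd_add)
    qed
    then obtain s where s: "int k * hh - t = 5 * s" by blast
    have l: "m^2 dvd ?H (i + k*N) - ?H i - int k * m * hh"
      unfolding hh_def h_def by (rule lift2[OF perm rH])
    have "5 * m dvd m^2" using assms(4) by (simp add: power2_eq_square)
    then have l5: "5 * m dvd ?H (i + k*N) - ?H i - int k * m * hh" using l by (metis dvd_trans)
    have "?H (i + k*N) - r = (?H (i + k*N) - ?H i - int k * m * hh) + (5 * m) * s"
    proof -
      have "?H (i + k*N) - r = (?H (i + k*N) - ?H i - int k * m * hh) + m * (int k * hh - t)"
        using t by (simp add: algebra_simps)
      then show ?thesis using s by simp
    qed
    then have "5 * m dvd ?H (i + k*N) - r" using l5 by (metis dvd_add dvd_triv_left)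
    then have "[G a b (i + k*N + 1) = r] (mod 5*m)" unfolding G_def by (simp add: cong_iff_dvd_diff)
    then show "\<exists>n\<ge>1. [G a b n = r] (mod 5 * m)" by (intro exI[of _ "i + k*N + 1"]) simp
  qed
qed


end
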